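(* The hereditary class property $\Sigma=$ "weakly sparse" — the set of hereditary classes $\mathscr C$ for which there is an integer $t$ such that no graph in $\mathscr C$ contains $K_{t,t}$ as a subgraph — is a decomposition horizon, i.e. $\Sigma^\ast=\Sigma$.
   Context: Graphs are finite and simple; $K_{t,t}$ is the complete bipartite graph with both parts of size $t$. A hereditary class is a class closed under isomorphism and induced subgraphs; a hereditary class property is a set $\Pi$ of hereditary classes closed under passing to hereditary subclasses. For non-decreasing $f:\mathbb N\to\mathbb N$ and positive integer $p$, $\mathscr C$ has an $f$-bounded $\Pi$-decomposition with parameter $p$ if there is $\mathscr D_p\in\Pi$ such that every $G\in\mathscr C$ has a partition $V_1,\dots,V_N$ of $V(G)$ with $N\le f(|G|)$ and $G[V_{i_1}\cup\dots\cup V_{i_p}]\in\mathscr D_p$ for all $i_1,\dots,i_p\in[N]$. $\Pi^\ast$ is the set of hereditary classes that, for every positive integer $p$, have such a decomposition for some non-decreasing $f$ with $f(n)=n^{o(1)}$. $\Pi$ is a decomposition horizon if $\Pi^\ast=\Pi$. *)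

theory Defs
  imports Complex_Main
begin

text \<open>Finite simple graphs, represented with vertices drawn from nat
 (every finite graph is isomorphic to such a graph).\<close>

type_synonym graph = "nat set \<times> nat set set"

definition verts :: "graph \<Rightarrow> nat set" where "verts G = fst G"
definition edges :: "graph \<Rightarrow> nat set set" where "edges G = snd G"

definition is_graph :: "graph \<Rightarrow> bool" where
  "is_graph G \<longleftrightarrow> finite (verts G) \<and>
     (\<forall>e\<in>edges G. \<exists>u v. u \<noteq> v \<and> u \<in> verts G \<and> v \<in> verts G \<and> e = {u, v})"

definition induced :: "graph \<Rightarrow> nat set \<Rightarrow> graph" where
  "induced G S = (S \<inter> verts G, {e \<in> edges G. e \<subseteq> S})"

definition isomorphic :: "graph \<Rightarrow> graph \<Rightarrow> bool" where
  "isomorphic G H \<longleftrightarrow> (\<exists>f. bij_betw f (verts G) (verts H) \<and>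
     (\<forall>u\<in>verts G. \<forall>v\<in>verts G. {u, v} \<in> edges G \<longleftrightarrow> {f u, f v} \<in> edges H))"

definition hereditary :: "graph set \<Rightarrow> bool" where
  "hereditary C \<longleftrightarrow> (\<forall>G\<in>C. is_graph G) \<and>
     (\<forall>G\<in>C. \<forall>H. is_graph H \<and> isomorphic G H \<longrightarrow> H \<in> C) \<and>
     (\<forall>G\<in>C. \<forall>S. S \<subseteq> verts G \<longrightarrow> induced G S \<in> C)"

definition class_property :: "graph set set \<Rightarrow> bool" where
  "class_property \<Pi> \<longleftrightarrow> (\<forall>C\<in>\<Pi>. hereditary C) \<and>
     (\<forall>C\<in>\<Pi>. \<forall>D. hereditary D \<and> D \<subseteq> C \<longrightarrow> D \<in> \<Pi>)"

text \<open>f-bounded \<Pi>-decomposition with parameter p. The parts V_1..V_N are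
 indexed by 0..N-1 (parts may be empty, which is harmless since N is only
 bounded from above); a choice i_1..i_p is a map from {0..<p} to {0..<N}.\<close>
definition has_decomposition ::
  "graph set set \<Rightarrow> (nat \<Rightarrow> nat) \<Rightarrow> nat \<Rightarrow> graph set \<Rightarrow> bool" where
  "has_decomposition \<Pi> f p C \<longleftrightarrow> (\<exists>D\<in>\<Pi>. \<forall>G\<in>C. \<exists>N P.
      N \<le> f (card (verts G)) \<and>
      (\<forall>i<N. \<forall>j<N. i \<noteq> j \<longrightarrow> P i \<inter> P j = {}) \<and>
      (\<Union>i<N. P i) = verts G \<and>
      (\<forall>s::nat \<Rightarrow> nat. (\<forall>k<p. s k < N) \<longrightarrow> induced G (\<Union>k<p. P (s k)) \<in> D))"

text \<open>f(n) = n^{o(1)}: for every \<epsilon> > 0, eventually f(n) \<le> n^\<epsilon>.\<close>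
definition subpolynomial :: "(nat \<Rightarrow> nat) \<Rightarrow> bool" where
  "subpolynomial f \<longleftrightarrow> (\<forall>\<epsilon>::real. \<epsilon> > 0 \<longrightarrow>
      (\<forall>\<^sub>F n in sequentially. real (f n) \<le> real n powr \<epsilon>))"

definition Pi_star :: "graph set set \<Rightarrow> graph set set" where
  "Pi_star \<Pi> = {C. hereditary C \<and> (\<forall>p::nat. p > 0 \<longrightarrow>
      (\<exists>f. mono f \<and> subpolynomial f \<and> has_decomposition \<Pi> f p C))}"

definition decomposition_horizon :: "graph set set \<Rightarrow> bool" where
  "decomposition_horizon \<Pi> \<longleftrightarrow> Pi_star \<Pi> = \<Pi>"

definition contains_Ktt :: "nat \<Rightarrow> graph \<Rightarrow> bool" where
  "contains_Ktt t G \<longleftrightarrow> (\<exists>A B. A \<subseteq> verts G \<and> B \<subseteq> verts G \<and> A \<inter> B = {} \<and>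
      card A = t \<and> card B = t \<and> (\<forall>a\<in>A. \<forall>b\<in>B. {a, b} \<in> edges G))"

definition weakly_sparse :: "graph set set" where
  "weakly_sparse = {C. hereditary C \<and> (\<exists>t. \<forall>G\<in>C. \<not> contains_Ktt t G)}"

end

theory Submission
  imports Defs
begin

lemma pigeon:
  fixes A :: "nat set" and P :: "nat \<Rightarrow> nat set"
  assumes "finite A" "A \<subseteq> (\<Union>i<N. P i)" "N > 0"
  shows "\<exists>i<N. card A \<le> N * card (A \<inter> P i)"
proof (rule ccontr)
  assume H: "\<not> ?thesis"
  have eq: "A = (\<Union>i<N. A \<inter> P i)" using assms(2) by blast
  have "card A \<le> (\<Sum>i<N. card (A \<inter> P i))"
    by (subst eq) (rule card_UN_le, simp)
  hence "N * card A \<le> N * (\<Sum>i<N. card (A \<inter> P i))"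
    by simp
  also have "\<dots> = (\<Sum>i<N. N * card (A \<inter> P i))"
    by (simp add: sum_distrib_left)
  also have "\<dots> < (\<Sum>i<N. card A)"
    using H assms(3) by (intro sum_strict_mono) auto
  also have "\<dots> = N * card A" by simp
  finally show False by simp
qed

lemma class_prop: "class_property weakly_sparse"
  unfolding class_property_def weakly_sparse_def 
  by (auto 0 0) (meson subsetD)

lemma sub1: "weakly_sparse \<subseteq> Pi_star weakly_sparse"
proof
  fix C assume C: "C \<in> weakly_sparse"
  hence hC: "hereditary C" unfolding weakly_sparse_def by blast
  have "has_decomposition weakly_sparse (\<lambda>_. 1) p C" if "p > 0" for p
    unfolding has_decomposition_def
  proof (intro bexI[of _ C] ballI)
    fix G assume G: "G \<in> C"
    show "\<exists>N P. N \<le> 1 \<and> (\<forall>i<N. \<forall>j<N. i \<noteq> j \<longrightarrow> P i \<inter> P j = {}) \<and>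
      (\<Union>i<N. P i) = verts G \<and>
      (\<forall>s::nat \<Rightarrow> nat. (\<forall>k<p. s k < N) \<longrightarrow> induced G (\<Union>k<p. P (s k)) \<in> C)"
    proof (intro exI[of _ 1] exI[of _ "\<lambda>_. verts G"] conjI allI impI)
      fix s :: "nat \<Rightarrow> nat"
      have "(\<Union>k<p. verts G) = verts G" using \<open>p > 0\<close> by auto
      thus "induced G (\<Union>k<p. (\<lambda>_. verts G) (s k)) \<in> C"
        using hC G unfolding hereditary_def by auto
    qed auto
  qed (rule C)
  moreover have "mono (\<lambda>_::nat. 1::nat)" by (simp add: mono_def)
  moreover have "subpolynomial (\<lambda>_. 1)"
    unfolding subpolynomial_def
  proof (intro allI impI)
    fix e :: real assume "e > 0"
    show "\<forall>\<^sub>F n in sequentially. real 1 \<le> real n powr e"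
      using eventually_ge_at_top[of "1::nat"]
      by eventually_elim (use \<open>e > 0\<close> in \<open>auto intro: ge_one_powr_ge_zero\<close>)
  qed
  ultimately show "C \<in> Pi_star weakly_sparse"
    unfolding Pi_star_def using hC by blast
qed

lemma sub2: "Pi_star weakly_sparse \<subseteq> weakly_sparse"
proof
  fix C assume C: "C \<in> Pi_star weakly_sparse"
  hence hC: "hereditary C" unfolding Pi_star_def by blast
  obtain f where fm: "mono f" and fs: "subpolynomial f"
    and fd: "has_decomposition weakly_sparse f 2 C"
  proof -
    have "\<forall>p::nat. p > 0 \<longrightarrow> (\<exists>f. mono f \<and> subpolynomial f \<and> has_decomposition weakly_sparse f p C)"
      using C unfolding Pi_star_def by simp
    hence "\<exists>f. mono f \<and> subpolynomial f \<and> has_decomposition weakly_sparse f 2 C" by simp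
    thus ?thesis using that by blast
  qed
  obtain D where D: "D \<in> weakly_sparse" and
    dec: "\<forall>G\<in>C. \<exists>N P.
      N \<le> f (card (verts G)) \<and>
      (\<forall>i<N. \<forall>j<N. i \<noteq> j \<longrightarrow> P i \<inter> P j = {}) \<and>
      (\<Union>i<N. P i) = verts G \<and>
      (\<forall>s::nat \<Rightarrow> nat. (\<forall>k<2. s k < N) \<longrightarrow> induced G (\<Union>k<2. P (s k)) \<in> D)"
    using fd unfolding has_decomposition_def by (elim bexE) (rule that)
  obtain t0 where t0: "\<forall>G\<in>D. \<not> contains_Ktt t0 G"
    using D unfolding weakly_sparse_def by blast
  have "\<forall>\<^sub>F n in sequentially. real (f n) \<le> real n powr (1/2)"
    using fs unfolding subpolynomial_def by simp
  then obtain n0 where n0: "\<And>n. n \<ge> n0 \<Longrightarrow> real (f n) \<le> real n powr (1/2)"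
    unfolding eventually_sequentially by blast
  define m where "m = max t0 n0 + 1"
  define s where "s = 2 * m * m"
  have "m \<ge> n0" unfolding m_def by simp
  moreover have "m \<le> 4 * m * m"
  proof -
    have "1 * m \<le> (4 * m) * m" by (intro mult_le_mono1) (simp add: m_def)
    thus ?thesis by simp
  qed
  ultimately have "4 * m * m \<ge> n0" by linarith
  hence "real (f (4 * m * m)) \<le> real (4*m*m) powr (1/2)" by (rule n0)
  also have "real (4*m*m) powr (1/2) = 2 * m"
  proof -
    have "real (4*m*m) = (2 * real m)^2" by (simp add: power2_eq_square)
    have "real (4*m*m) powr (1/2) = sqrt (real (4*m*m))"
      by (simp only: powr_half_sqrt of_nat_0_le_iff)
    also have "\<dots> = sqrt ((2 * real m)^2)" by (simp only: \<open>real (4*m*m) = (2 * real m)^2\<close>)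
    also have "\<dots> = 2 * real m" by (simp only: real_sqrt_abs abs_of_nonneg[of "2 * real m"] mult_nonneg_nonneg zero_le_numeral of_nat_0_le_iff)
    finally show ?thesis by simp
  qed
  finally have fm2: "f (4*m*m) \<le> 2 * m" by linarith
  have tm: "t0 \<le> m" unfolding m_def by simp
  have spos: "s > 0" unfolding s_def m_def by simp
  have "\<forall>G\<in>C. \<not> contains_Ktt s G"
  proof (intro ballI notI)
    fix G assume G: "G \<in> C" and K: "contains_Ktt s G"
    obtain A B where AB: "A \<subseteq> verts G" "B \<subseteq> verts G" "A \<inter> B = {}"
      "card A = s" "card B = s" "\<forall>a\<in>A. \<forall>b\<in>B. {a, b} \<in> edges G"
      using K unfolding contains_Ktt_def by blast
    have fin: "finite (verts G)" using hC G unfolding hereditary_def is_graph_def by blast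
    hence finA: "finite A" and finB: "finite B" using AB finite_subset by auto
    define G' where "G' = induced G (A \<union> B)"
    have hI: "\<forall>G\<in>C. \<forall>S. S \<subseteq> verts G \<longrightarrow> induced G S \<in> C"
      using hC unfolding hereditary_def by (elim conjE)
    have "A \<union> B \<subseteq> verts G" using AB(1,2) by (rule Un_least)
    hence G'C: "G' \<in> C" using hI G unfolding G'_def by blast
    have vG': "verts G' = A \<union> B" using AB unfolding G'_def induced_def verts_def by auto
    have eG': "edges G' = {e \<in> edges G. e \<subseteq> A \<union> B}"
      unfolding G'_def induced_def edges_def by simp
    have cG': "card (verts G') = 4*m*m"
    proof -
      have "card (A \<union> B) = card A + card B" using finA finB AB(3) by (rule card_Un_disjoint)
      thus ?thesis using vG' AB(4,5) unfolding s_def by simp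
    qed
    obtain N P where NP: "N \<le> f (4*m*m)"
      "(\<Union>i<N. P i) = A \<union> B"
      "\<forall>sf::nat \<Rightarrow> nat. (\<forall>k<2. sf k < N) \<longrightarrow> induced G' (\<Union>k<2. P (sf k)) \<in> D"
    proof -
      have ex: "\<exists>N P.
      N \<le> f (card (verts G')) \<and>
      (\<forall>i<N. \<forall>j<N. i \<noteq> j \<longrightarrow> P i \<inter> P j = {}) \<and>
      (\<Union>i<N. P i) = verts G' \<and>
      (\<forall>s::nat \<Rightarrow> nat. (\<forall>k<2. s k < N) \<longrightarrow> induced G' (\<Union>k<2. P (s k)) \<in> D)"
        using dec G'C by (rule bspec)
      from ex obtain N P where "N \<le> f (card (verts G'))"
        "(\<Union>i<N. P i) = verts G'"
        "\<forall>sf::nat \<Rightarrow> nat. (\<forall>k<2. sf k < N) \<longrightarrow> induced G' (\<Union>k<2. P (sf k)) \<in> D"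
        by (elim exE conjE) (rule that)
      thus ?thesis using that cG' vG' by simp
    qed
    have Npos: "N > 0"
    proof (rule ccontr)
      assume "\<not> N > 0" hence "A \<union> B = {}" using NP(2) by auto
      thus False using AB(4) spos by auto
    qed
    have Nle: "N * t0 \<le> s"
    proof -
      have "N * t0 \<le> 2 * m * t0" using NP(1) fm2 by simp
      also have "\<dots> \<le> 2 * m * m" using tm by (intro mult_le_mono2)
      finally show ?thesis unfolding s_def .
    qed
    obtain i where i: "i < N" "card A \<le> N * card (A \<inter> P i)"
      using pigeon[OF finA _ Npos, of P] NP(2) by blast
    obtain j where j: "j < N" "card B \<le> N * card (B \<inter> P j)"
      using pigeon[OF finB _ Npos, of P] NP(2) by blast
    have "N * t0 \<le> N * card (A \<inter> P i)" using i AB(4) Nle by linarith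
    hence "t0 \<le> card (A \<inter> P i)" using Npos by simp
    then obtain A' where A': "A' \<subseteq> A \<inter> P i" "card A' = t0"
      by (meson obtain_subset_with_card_n)
    have "N * t0 \<le> N * card (B \<inter> P j)" using j AB(5) Nle by linarith
    hence "t0 \<le> card (B \<inter> P j)" using Npos by simp
    then obtain B' where B': "B' \<subseteq> B \<inter> P j" "card B' = t0"
      by (meson obtain_subset_with_card_n)
    define sf where "sf = (\<lambda>k::nat. if k = 0 then i else j)"
    have U: "(\<Union>k<2. P (sf k)) = P i \<union> P j"
    proof -
      have "{..<2::nat} = {0, 1}" by auto
      thus ?thesis unfolding sf_def by simp
    qed
    have inD: "induced G' (P i \<union> P j) \<in> D"
      using NP(3)[rule_format, of sf] i j U unfolding sf_def by auto
    have c1: "A' \<subseteq> verts (induced G' (P i \<union> P j))"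
      using A' vG' unfolding induced_def verts_def by auto
    have c2: "B' \<subseteq> verts (induced G' (P i \<union> P j))"
      using B' vG' unfolding induced_def verts_def by auto
    have c3: "A' \<inter> B' = {}" using A' B' AB(3) by auto
    have c4: "\<forall>a\<in>A'. \<forall>b\<in>B'. {a, b} \<in> edges (induced G' (P i \<union> P j))"
    proof (intro ballI)
      fix a b assume a: "a \<in> A'" and b: "b \<in> B'"
      have aA: "a \<in> A" using a A'(1) by blast
      have bB: "b \<in> B" using b B'(1) by blast
      have "{a, b} \<in> edges G" using AB(6) aA bB by blast
      thus "{a, b} \<in> edges (induced G' (P i \<union> P j))"
        using a b A' B' eG' unfolding induced_def edges_def by auto
    qed
    have "contains_Ktt t0 (induced G' (P i \<union> P j))"
      unfolding contains_Ktt_def using c1 c2 c3 c4 A'(2) B'(2) by blast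
    thus False using t0 inD by blast
  qed
  thus "C \<in> weakly_sparse" unfolding weakly_sparse_def using hC by blast
qed

theorem mainTheorem5:
  shows "class_property weakly_sparse \<and> decomposition_horizon weakly_sparse"
  using class_prop sub1 sub2 unfolding decomposition_horizon_def by blast

end
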